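(* Under the hypotheses of the preceding setting (independent $[0,1]$-valued $X_t$ with common mean $\mu$, filtration $(\mathcal{F}_t)$ with $\sigma(X_1,\dots,X_t)\subset\mathcal{F}_t$ and $X_s$ independent of $\mathcal{F}_t$ for $s>t$, $\{0,1\}$-valued $\epsilon_t$ that are $\mathcal{F}_{t-1}$-measurable, $S(n)=\sum_{s\le n}\epsilon_sX_s$, $N(n)=\sum_{s\le n}\epsilon_s$, $\hat\mu(n)=S(n)/N(n)$), for every $\delta>0$ and every integer $n\ge2$, \[\mathbb{P}\big(N(n)\ge1,\ N(n)\,d(\hat\mu(n),\mu)>\delta\big)\le 2e\lceil\delta\log(n)\rceil\exp(-\delta).\]
   Context: $d(p,q)=p\log\frac pq+(1-p)\log\frac{1-p}{1-q}$ for $p,q\in[0,1]$ (Bernoulli Kullback–Leibler divergence), with conventions $0\log0=0\log(0/0)=0$ and $x\log(x/0)=+\infty$ for $x>0$. *)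

theory Defs
  imports "HOL-Probability.Probability"
begin

definition xlogxy :: "real \<Rightarrow> real \<Rightarrow> ereal" where
  "xlogxy x y = (if x = 0 then 0 else if y = 0 then \<infinity> else ereal (x * ln (x / y)))"

definition kl_bern :: "real \<Rightarrow> real \<Rightarrow> ereal" where
  "kl_bern p q = xlogxy p q + xlogxy (1 - p) (1 - q)"

end

theory Submission
  imports Defs
begin

definition phi :: "real \<Rightarrow> real \<Rightarrow> real" where
  "phi \<mu> l = ln (1 - \<mu> + \<mu> * exp l)"

definition DD :: "real \<Rightarrow> real \<Rightarrow> real" where
  "DD \<mu> x = x * ln (x / \<mu>) + (1 - x) * ln ((1 - x) / (1 - \<mu>))"

lemma kl_eq_DD:
  assumes "0 < \<mu>" "\<mu> < 1" "0 < x" "x < 1"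
  shows "kl_bern x \<mu> = ereal (DD \<mu> x)"
  using assms by (simp add: kl_bern_def xlogxy_def DD_def)

lemma kl_one:
  assumes "0 < \<mu>" "\<mu> < 1"
  shows "kl_bern 1 \<mu> = ereal (- ln \<mu>)"
  using assms by (simp add: kl_bern_def xlogxy_def ln_div)

lemma DD_self: "0 < \<mu> \<Longrightarrow> \<mu> < 1 \<Longrightarrow> DD \<mu> \<mu> = 0"
  by (simp add: DD_def)

lemma DD_deriv:
  assumes "0 < \<mu>" "\<mu> < 1" "0 < x" "x < 1"
  shows "(DD \<mu> has_real_derivative (ln (x / \<mu>) - ln ((1 - x) / (1 - \<mu>)))) (at x)"
proof -
  have "((\<lambda>x. x * (ln x - ln \<mu>) + (1 - x) * (ln (1 - x) - ln (1 - \<mu>))) has_real_derivative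
      (1 * (ln x - ln \<mu>) + x * (1 / x) + ((-1) * (ln (1 - x) - ln (1 - \<mu>)) + (1 - x) * (- 1 / (1 - x))))) (at x)"
    using assms by (auto intro!: derivative_eq_intros)
  moreover have "(1 * (ln x - ln \<mu>) + x * (1 / x) + ((-1) * (ln (1 - x) - ln (1 - \<mu>)) + (1 - x) * (- 1 / (1 - x))))
      = ln (x / \<mu>) - ln ((1 - x) / (1 - \<mu>))"
    using assms by (simp add: ln_div)
  ultimately have "((\<lambda>x. x * (ln x - ln \<mu>) + (1 - x) * (ln (1 - x) - ln (1 - \<mu>))) has_real_derivative
       (ln (x / \<mu>) - ln ((1 - x) / (1 - \<mu>)))) (at x)" by simp
  then show ?thesis
    by (rule has_field_derivative_transform_within_open[where S="{0<..<1}"])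
       (use assms in \<open>auto simp: DD_def ln_div\<close>)
qed
lemma DD_cont:
  assumes "0 < \<mu>" "\<mu> < 1" "0 < a" "b < 1"
  shows "continuous_on {a..b} (DD \<mu>)"
proof -
  have "\<forall>x\<in>{a..b}. isCont (DD \<mu>) x"
    using assms DD_deriv[OF assms(1,2)] DERIV_isCont by (meson atLeastAtMost_iff dual_order.strict_trans1 order_le_less_trans)
  then show ?thesis by (simp add: continuous_at_imp_continuous_on)
qed

lemma DD_mono:
  assumes "0 < \<mu>" "\<mu> < 1" "\<mu> \<le> x" "x \<le> z" "z < 1"
  shows "DD \<mu> x \<le> DD \<mu> z"
proof (rule DERIV_nonneg_imp_increasing_open[OF assms(4)])
  fix y assume y: "x < y" "y < z"
  have "x/\<mu> \<le> y / \<mu>" using assms y by (simp add: divide_right_mono)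
  then have "ln (x/\<mu>) \<le> ln (y / \<mu>)" using assms y by simp
  moreover have "0 \<le> ln (x/\<mu>)" using assms by simp
  moreover have "ln ((1 - y) / (1 - \<mu>)) \<le> 0" using assms y by simp
  ultimately have "0 \<le> ln (y / \<mu>) - ln ((1 - y) / (1 - \<mu>))" by linarith
  moreover have "(DD \<mu> has_real_derivative (ln (y / \<mu>) - ln ((1 - y) / (1 - \<mu>)))) (at y)"
    using DD_deriv[OF assms(1,2), of y] assms y by simp
  ultimately show "\<exists>d. (DD \<mu> has_real_derivative d) (at y) \<and> 0 \<le> d" by blast
next
  show "continuous_on {x..z} (DD \<mu>)" using assms by (intro DD_cont) auto
qed

lemma DD_dual:
  assumes "0 < \<mu>" "\<mu> < 1" "0 < z" "z < 1"
  shows "(ln (z / \<mu>) - ln ((1 - z) / (1 - \<mu>))) * z - phi \<mu> (ln (z / \<mu>) - ln ((1 - z) / (1 - \<mu>))) = DD \<mu> z"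
proof -
  have e: "exp (ln (z / \<mu>) - ln ((1 - z) / (1 - \<mu>))) = (z / \<mu>) / ((1 - z) / (1 - \<mu>))"
    using assms by (simp add: exp_diff)
  have "1 - \<mu> + \<mu> * ((z / \<mu>) / ((1 - z) / (1 - \<mu>))) = (1 - \<mu>) / (1 - z)"
    using assms by (simp add: field_simps)
  then have p: "phi \<mu> (ln (z / \<mu>) - ln ((1 - z) / (1 - \<mu>))) = ln (1 - \<mu>) - ln (1 - z)"
    using assms unfolding phi_def e by (simp add: ln_div)
  show ?thesis using assms unfolding p DD_def by (simp add: ln_div algebra_simps)
qed

lemma core:
  assumes mu: "0 < \<mu>" "\<mu> < 1" and c: "c > 0"
  shows "\<exists>l. \<forall>x\<in>{\<mu>..1}. kl_bern x \<mu> > ereal c \<longrightarrow> l * x - phi \<mu> l \<ge> c"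
proof (cases "\<exists>b. \<mu> < b \<and> b < 1 \<and> DD \<mu> b \<ge> c")
  case True
  then obtain b where b: "\<mu> < b" "b < 1" "DD \<mu> b \<ge> c" by blast
  have "\<exists>z. \<mu> \<le> z \<and> z \<le> b \<and> DD \<mu> z = c"
    by (rule IVT') (use b mu c DD_self DD_cont in auto)
  then obtain z where z: "\<mu> \<le> z" "z \<le> b" "DD \<mu> z = c" by blast
  have "z \<noteq> \<mu>" using z c DD_self[OF mu] by auto
  with z have z2: "\<mu> < z" "z < 1" using b by auto
  define l where "l = ln (z / \<mu>) - ln ((1 - z) / (1 - \<mu>))"
  have "z / \<mu> \<ge> 1" using z2 mu by simp
  moreover have "(1 - z) / (1 - \<mu>) \<le> 1" using z2 mu by simp
  moreover have "(1 - z) / (1 - \<mu>) > 0" using z2 mu by simp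
  ultimately have l0: "l \<ge> 0" unfolding l_def by (smt (verit) ln_ge_zero ln_le_zero_iff)
  have dual: "l * z - phi \<mu> l = c"
    using DD_dual[OF mu, of z] z2 mu z unfolding l_def by simp
  show ?thesis
  proof (intro exI ballI impI)
    fix x assume x: "x \<in> {\<mu>..1}" and kx: "ereal c < kl_bern x \<mu>"
    have "x > z"
    proof (rule ccontr)
      assume "\<not> z < x"
      then have xz: "x \<le> z" by simp
      then have "x < 1" using z2 by simp
      have "x > 0" using x mu by simp
      have "DD \<mu> x \<le> DD \<mu> z" using DD_mono[OF mu, of x z] x xz z2 by simp
      moreover have "kl_bern x \<mu> = ereal (DD \<mu> x)" using kl_eq_DD[OF mu \<open>x>0\<close> \<open>x<1\<close>] .
      ultimately show False using kx z by simp
    qed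
    then have "l * x \<ge> l * z" using l0 by (simp add: mult_left_mono)
    then show "l * x - phi \<mu> l \<ge> c" using dual by linarith
  qed
next
  case False
  then have small: "\<And>b. \<mu> < b \<Longrightarrow> b < 1 \<Longrightarrow> DD \<mu> b < c" by force
  have below: "\<And>x. x \<in> {\<mu>..<1} \<Longrightarrow> \<not> kl_bern x \<mu> > ereal c"
  proof -
    fix x assume x: "x \<in> {\<mu>..<1}"
    have "DD \<mu> x \<le> c"
    proof (cases "x = \<mu>")
      case True then show ?thesis using DD_self[OF mu] c by simp
    next
      case False then show ?thesis using small[of x] x by auto
    qed
    then show "\<not> kl_bern x \<mu> > ereal c" using kl_eq_DD[OF mu, of x] x mu by auto
  qed
  define e where "e = exp (- c)"
  have e: "0 < e" "e < 1" using c unfolding e_def by auto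
  show ?thesis
  proof (cases "e \<le> \<mu>")
    case True
    have "ln e \<le> ln \<mu>" using True e by simp
    then have "- ln \<mu> \<le> c" unfolding e_def by simp
    then have "\<not> kl_bern 1 \<mu> > ereal c" using kl_one[OF mu] by simp
    then show ?thesis using below by (metis atLeastAtMost_iff atLeastLessThan_iff order_less_le)
  next
    case False
    define l where "l = - ln ((e - \<mu>) / (1 - \<mu>))"
    have q: "(e - \<mu>) / (1 - \<mu>) > 0" using False mu by simp
    have el: "exp l = (1 - \<mu>) / (e - \<mu>)" unfolding l_def using q False mu
      by (simp add: exp_minus)
    have "1 - \<mu> + \<mu> * exp l = (1 - \<mu>) * e / (e - \<mu>)"
      unfolding el using False mu by (simp add: field_simps)
    then have "phi \<mu> l = ln (1 - \<mu>) + ln e - ln (e - \<mu>)"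
      unfolding phi_def using False mu e by (simp add: ln_div ln_mult)
    moreover have "l = ln (1 - \<mu>) - ln (e - \<mu>)"
      unfolding l_def using False mu by (simp add: ln_div)
    ultimately have "l * 1 - phi \<mu> l = c" unfolding e_def by simp
    then show ?thesis using below
      by (metis atLeastAtMost_iff atLeastLessThan_iff order_less_le order_refl)
  qed
qed

lemma exp_le_lin: "0 \<le> (x::real) \<Longrightarrow> x \<le> 1 \<Longrightarrow> exp (l * x) \<le> 1 - x + x * exp l"
  using convex_onD[OF exp_convex, of x 0 l] by (simp add: mult.commute)

locale bsetting = prob_space M for M :: "'a measure" +
  fixes F :: "nat \<Rightarrow> 'a measure" and X :: "nat \<Rightarrow> 'a \<Rightarrow> real"
    and eps :: "nat \<Rightarrow> 'a \<Rightarrow> real" and \<mu> :: real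
  assumes X_range: "\<And>t \<omega>. t \<ge> 1 \<Longrightarrow> \<omega> \<in> space M \<Longrightarrow> X t \<omega> \<in> {0..1}"
    and X_mean: "\<And>t. t \<ge> 1 \<Longrightarrow> expectation (X t) = \<mu>"
    and F_sub: "\<And>t. subalgebra M (F t)"
    and F_mono: "\<And>s t. s \<le> t \<Longrightarrow> sets (F s) \<subseteq> sets (F t)"
    and X_adapted: "\<And>s t. 1 \<le> s \<Longrightarrow> s \<le> t \<Longrightarrow> X s \<in> borel_measurable (F t)"
    and X_future_indep: "\<And>s t. t < s \<Longrightarrow>
          indep_set (sets (F t)) {X s -` A \<inter> space M | A. A \<in> sets borel}"
    and eps_range: "\<And>t \<omega>. t \<ge> 1 \<Longrightarrow> \<omega> \<in> space M \<Longrightarrow> eps t \<omega> \<in> {0, 1}"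
    and eps_pred: "\<And>t. t \<ge> 1 \<Longrightarrow> eps t \<in> borel_measurable (F (t - 1))"
begin

lemma meas_up: "f \<in> borel_measurable (F s) \<Longrightarrow> s \<le> t \<Longrightarrow> f \<in> borel_measurable (F t)"
  using F_sub[of s] F_sub[of t] F_mono[of s t] unfolding measurable_def subalgebra_def by auto

lemma meas_M: "f \<in> borel_measurable (F t) \<Longrightarrow> f \<in> borel_measurable M"
  by (rule measurable_from_subalg[OF F_sub])

lemma epsF: "1 \<le> s \<Longrightarrow> s \<le> t + 1 \<Longrightarrow> eps s \<in> borel_measurable (F t)"
proof -
  assume a: "1 \<le> s" "s \<le> t + 1"
  have "s - 1 \<le> t" using a by linarith
  then show ?thesis using meas_up[OF eps_pred[OF a(1)]] by blast
qed

lemma XM: "1 \<le> s \<Longrightarrow> X s \<in> borel_measurable M"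
  using meas_M[OF X_adapted[of s s]] by simp

lemma epsM: "1 \<le> s \<Longrightarrow> eps s \<in> borel_measurable M"
  using meas_M[OF epsF[of s s]] by simp

lemma mu01: "0 \<le> \<mu>" "\<mu> \<le> 1"
proof -
  have "integrable M (X 1)"
    by (rule integrable_const_bound[where B=1]) (use X_range XM in auto)
  have "0 \<le> expectation (X 1)" by (rule integral_nonneg_AE) (use X_range in auto)
  moreover have "expectation (X 1) \<le> expectation (\<lambda>_. 1)"
    by (rule integral_mono_AE) (use X_range \<open>integrable M (X 1)\<close> in auto)
  ultimately show "0 \<le> \<mu>" "\<mu> \<le> 1" using X_mean[of 1] prob_space by auto
qed

lemma bounded_int: "f \<in> borel_measurable M \<Longrightarrow> (\<And>\<omega>. \<omega> \<in> space M \<Longrightarrow> \<bar>f \<omega>\<bar> \<le> (B::real)) \<Longrightarrow> integrable M (f :: 'a \<Rightarrow> real)"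
  by (rule integrable_const_bound[where B=B]) auto

lemma indep_prod:
  fixes G :: "'a \<Rightarrow> real" and h :: "real \<Rightarrow> real"
  assumes ts: "t < s" and G: "G \<in> borel_measurable (F t)" and h: "h \<in> borel_measurable borel"
    and iG: "integrable M G" and ih: "integrable M (\<lambda>\<omega>. h (X s \<omega>))"
  shows "expectation (\<lambda>\<omega>. G \<omega> * h (X s \<omega>)) = expectation G * expectation (\<lambda>\<omega>. h (X s \<omega>))"
proof -
  have s1: "1 \<le> s" using ts by simp
  have sp: "space (F t) = space M" using F_sub[of t] unfolding subalgebra_def by auto
  have "indep_var borel G borel (X s)"
    unfolding indep_var_def indep_vars_def2
  proof
    show "\<forall>i\<in>UNIV. random_variable (case_bool borel borel i) (case_bool G (X s) i)"
      using meas_M[OF G] XM[OF s1] by (auto split: bool.split)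
    show "indep_sets (\<lambda>i. {case_bool G (X s) i -` A \<inter> space M |A. A \<in> sets (case_bool borel borel i)}) UNIV"
      using X_future_indep[OF ts] unfolding indep_set_def
    proof (rule indep_sets_mono_sets)
      fix i :: bool
      show "{case_bool G (X s) i -` A \<inter> space M |A. A \<in> sets (case_bool borel borel i)}
          \<subseteq> case_bool (sets (F t)) {X s -` A \<inter> space M |A. A \<in> sets borel} i"
      proof (cases i)
        case True
        then show ?thesis using measurable_sets[OF G] sp by auto
      next
        case False
        then show ?thesis by auto
      qed
    qed
  qed
  then have "indep_var borel (id \<circ> G) borel (h \<circ> X s)"
    by (rule indep_var_compose) (use h in auto)
  then have iv: "indep_var borel G borel (\<lambda>\<omega>. h (X s \<omega>))" by (simp add: comp_def)
  show ?thesis using indep_var_lebesgue_integral[OF iv iG ih] .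
qed

definition W :: "real \<Rightarrow> nat \<Rightarrow> 'a \<Rightarrow> real" where
  "W l m \<omega> = exp (\<Sum>s=1..m. eps s \<omega> * (l * X s \<omega> - phi \<mu> l))"

lemma W_measF: "W l m \<in> borel_measurable (F m)"
proof -
  have "(\<lambda>\<omega>. eps s \<omega> * (l * X s \<omega> - phi \<mu> l)) \<in> borel_measurable (F m)" if "s \<in> {1..m}" for s
  proof -
    have [measurable]: "eps s \<in> borel_measurable (F m)" "X s \<in> borel_measurable (F m)"
      using that epsF X_adapted by auto
    show ?thesis by measurable
  qed
  then have "(\<lambda>\<omega>. \<Sum>s=1..m. eps s \<omega> * (l * X s \<omega> - phi \<mu> l)) \<in> borel_measurable (F m)"
    by (rule borel_measurable_sum)
  then show ?thesis unfolding W_def by measurable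
qed

lemma W_bound: "\<omega> \<in> space M \<Longrightarrow> \<bar>W l m \<omega>\<bar> \<le> exp (real m * (\<bar>l\<bar> + \<bar>phi \<mu> l\<bar>))"
proof -
  assume w: "\<omega> \<in> space M"
  have "(\<Sum>s=1..m. eps s \<omega> * (l * X s \<omega> - phi \<mu> l)) \<le> (\<Sum>s=1..m. \<bar>l\<bar> + \<bar>phi \<mu> l\<bar>)"
  proof (rule sum_mono)
    fix s assume "s \<in> {1..m}"
    then have e: "eps s \<omega> \<in> {0,1}" and x: "X s \<omega> \<in> {0..1}" using eps_range X_range w by auto
    have "\<bar>l * X s \<omega>\<bar> \<le> \<bar>l\<bar>" using x by (auto simp: abs_mult intro: mult_left_le)
    then show "eps s \<omega> * (l * X s \<omega> - phi \<mu> l) \<le> \<bar>l\<bar> + \<bar>phi \<mu> l\<bar>" using e by auto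
  qed
  then show ?thesis unfolding W_def by simp
qed

lemma W_int: "integrable M (W l m)"
  using bounded_int[OF meas_M[OF W_measF] W_bound] .

lemma W_pos: "W l m \<omega> > 0" unfolding W_def by simp

end

context bsetting begin

lemma phi_pos: "1 - \<mu> + \<mu> * exp l > 0"
proof -
  have "\<mu> * exp l \<ge> 0" using mu01 by simp
  show ?thesis
  proof (cases "\<mu> = 1")
    case True then show ?thesis by simp
  next
    case False with mu01 have "1 - \<mu> > 0" by simp
    with \<open>\<mu> * exp l \<ge> 0\<close> show ?thesis by linarith
  qed
qed

lemma exp_phi: "exp (phi \<mu> l) = 1 - \<mu> + \<mu> * exp l"
  unfolding phi_def using phi_pos by simp

lemma lx_le: "0 \<le> (x::real) \<Longrightarrow> x \<le> 1 \<Longrightarrow> l * x \<le> \<bar>l\<bar>"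
proof -
  assume x: "0 \<le> x" "x \<le> 1"
  have "l * x \<le> \<bar>l\<bar> * x" using x by (simp add: mult_right_mono)
  also have "\<dots> \<le> \<bar>l\<bar>" using mult_left_le[of x "\<bar>l\<bar>"] x by simp
  finally show ?thesis .
qed

lemma mgf_le: "1 \<le> s \<Longrightarrow> expectation (\<lambda>\<omega>. exp (l * X s \<omega>)) \<le> exp (phi \<mu> l)"
proof -
  assume s: "1 \<le> s"
  have iX: "integrable M (X s)"
    by (rule bounded_int[where B=1, OF XM[OF s]]) (use X_range s in auto)
  have ie: "integrable M (\<lambda>\<omega>. exp (l * X s \<omega>))"
  proof (rule bounded_int[where B="exp \<bar>l\<bar>"])
    show "(\<lambda>\<omega>. exp (l * X s \<omega>)) \<in> borel_measurable M" using XM[OF s] by measurable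
    fix \<omega> assume w: "\<omega> \<in> space M"
    have "l * X s \<omega> \<le> \<bar>l\<bar>" using X_range[OF s w] lx_le by simp
    then show "\<bar>exp (l * X s \<omega>)\<bar> \<le> exp \<bar>l\<bar>" by simp
  qed
  have "expectation (\<lambda>\<omega>. exp (l * X s \<omega>)) \<le> expectation (\<lambda>\<omega>. 1 - X s \<omega> + X s \<omega> * exp l)"
  proof (rule integral_mono[OF ie])
    show "integrable M (\<lambda>\<omega>. 1 - X s \<omega> + X s \<omega> * exp l)"
      using iX by (intro Bochner_Integration.integrable_add Bochner_Integration.integrable_diff) auto
    fix \<omega> assume "\<omega> \<in> space M"
    then have "X s \<omega> \<in> {0..1}" using X_range[OF s] by simp
    then show "exp (l * X s \<omega>) \<le> 1 - X s \<omega> + X s \<omega> * exp l" using exp_le_lin by simp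
  qed
  also have "\<dots> = 1 - \<mu> + \<mu> * exp l"
  proof -
    have "expectation (\<lambda>\<omega>. 1 - X s \<omega> + X s \<omega> * exp l)
        = expectation (\<lambda>\<omega>. 1 - X s \<omega>) + expectation (\<lambda>\<omega>. X s \<omega> * exp l)"
      using iX by (intro Bochner_Integration.integral_add Bochner_Integration.integrable_diff) auto
    also have "expectation (\<lambda>\<omega>. 1 - X s \<omega>) = expectation (\<lambda>\<omega>. 1) - expectation (X s)"
      using iX by (intro Bochner_Integration.integral_diff) auto
    also have "expectation (\<lambda>\<omega>. X s \<omega> * exp l) = expectation (X s) * exp l" by simp
    finally show ?thesis using X_mean[OF s] prob_space by simp
  qed
  finally show ?thesis using exp_phi by simp
qed

lemma W_Suc: "\<omega> \<in> space M \<Longrightarrow> W l (Suc m) \<omega> =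
   W l m \<omega> * (1 - eps (Suc m) \<omega>) + (W l m \<omega> * eps (Suc m) \<omega> * exp (- phi \<mu> l)) * exp (l * X (Suc m) \<omega>)"
proof -
  assume w: "\<omega> \<in> space M"
  have "W l (Suc m) \<omega> = W l m \<omega> * exp (eps (Suc m) \<omega> * (l * X (Suc m) \<omega> - phi \<mu> l))"
    unfolding W_def by (simp add: exp_add)
  moreover have "eps (Suc m) \<omega> \<in> {0,1}" using eps_range w by simp
  ultimately show ?thesis by (auto simp: exp_diff exp_minus field_simps)
qed

lemma W_le1: "expectation (W l m) \<le> 1"
proof (induction m)
  case 0
  then show ?case unfolding W_def using prob_space by simp
next
  case (Suc m)
  define e where "e = eps (Suc m)"
  define G where "G = (\<lambda>\<omega>. W l m \<omega> * e \<omega> * exp (- phi \<mu> l))"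
  have eF: "e \<in> borel_measurable (F m)" unfolding e_def by (rule epsF) auto
  have eb: "\<omega> \<in> space M \<Longrightarrow> e \<omega> \<in> {0,1}" for \<omega> unfolding e_def using eps_range by simp
  have WF[measurable]: "W l m \<in> borel_measurable (F m)" by (rule W_measF)
  have GF: "G \<in> borel_measurable (F m)" unfolding G_def using eF by measurable
  have WM[measurable]: "W l m \<in> borel_measurable M" by (rule meas_M[OF WF])
  have eM[measurable]: "e \<in> borel_measurable M" by (rule meas_M[OF eF])
  have XM1[measurable]: "X (Suc m) \<in> borel_measurable M" by (rule XM) simp
  define Bd where "Bd = exp (real m * (\<bar>l\<bar> + \<bar>phi \<mu> l\<bar>))"
  have Wb: "\<omega> \<in> space M \<Longrightarrow> \<bar>W l m \<omega>\<bar> \<le> Bd" for \<omega> unfolding Bd_def by (rule W_bound)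
  have i1: "integrable M (\<lambda>\<omega>. W l m \<omega> * (1 - e \<omega>))"
  proof (rule bounded_int[where B=Bd])
    fix \<omega> assume w: "\<omega> \<in> space M"
    show "\<bar>W l m \<omega> * (1 - e \<omega>)\<bar> \<le> Bd" using Wb[OF w] eb[OF w] by (auto simp: abs_mult)
  qed simp
  have i2: "integrable M (\<lambda>\<omega>. W l m \<omega> * e \<omega>)"
  proof (rule bounded_int[where B=Bd])
    fix \<omega> assume w: "\<omega> \<in> space M"
    show "\<bar>W l m \<omega> * e \<omega>\<bar> \<le> Bd" using Wb[OF w] eb[OF w] by (auto simp: abs_mult)
  qed simp
  have iG: "integrable M G"
    unfolding G_def using i2 by simp
  have iX: "integrable M (\<lambda>\<omega>. exp (l * X (Suc m) \<omega>))"
  proof (rule bounded_int[where B="exp \<bar>l\<bar>"])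
    show "(\<lambda>\<omega>. exp (l * X (Suc m) \<omega>)) \<in> borel_measurable M" by measurable
    fix \<omega> assume w: "\<omega> \<in> space M"
    have "l * X (Suc m) \<omega> \<le> \<bar>l\<bar>" using X_range[OF _ w, of "Suc m"] lx_le by simp
    then show "\<bar>exp (l * X (Suc m) \<omega>)\<bar> \<le> exp \<bar>l\<bar>" by simp
  qed
  have iGX: "integrable M (\<lambda>\<omega>. G \<omega> * exp (l * X (Suc m) \<omega>))"
  proof (rule bounded_int[where B="Bd * exp (- phi \<mu> l) * exp \<bar>l\<bar>"])
    show "(\<lambda>\<omega>. G \<omega> * exp (l * X (Suc m) \<omega>)) \<in> borel_measurable M" unfolding G_def by measurable
    fix \<omega> assume w: "\<omega> \<in> space M"
    have "l * X (Suc m) \<omega> \<le> \<bar>l\<bar>" using X_range[OF _ w, of "Suc m"] lx_le by simp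
    then have a: "exp (l * X (Suc m) \<omega>) \<le> exp \<bar>l\<bar>" by simp
    have b: "\<bar>W l m \<omega> * e \<omega>\<bar> \<le> Bd" using Wb[OF w] eb[OF w] by (auto simp: abs_mult)
    have "\<bar>G \<omega> * exp (l * X (Suc m) \<omega>)\<bar> = \<bar>W l m \<omega> * e \<omega>\<bar> * exp (- phi \<mu> l) * exp (l * X (Suc m) \<omega>)"
      unfolding G_def by (simp add: abs_mult)
    also have "\<dots> \<le> Bd * exp (- phi \<mu> l) * exp \<bar>l\<bar>"
      by (intro mult_mono a b) (auto simp: Bd_def)
    finally show "\<bar>G \<omega> * exp (l * X (Suc m) \<omega>)\<bar> \<le> Bd * exp (- phi \<mu> l) * exp \<bar>l\<bar>" .
  qed
  have "expectation (W l (Suc m)) = expectation (\<lambda>\<omega>. W l m \<omega> * (1 - e \<omega>) + G \<omega> * exp (l * X (Suc m) \<omega>))"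
    by (rule Bochner_Integration.integral_cong) (auto simp: W_Suc G_def e_def)
  also have "\<dots> = expectation (\<lambda>\<omega>. W l m \<omega> * (1 - e \<omega>)) + expectation (\<lambda>\<omega>. G \<omega> * exp (l * X (Suc m) \<omega>))"
    by (rule Bochner_Integration.integral_add[OF i1 iGX])
  also have "expectation (\<lambda>\<omega>. G \<omega> * exp (l * X (Suc m) \<omega>)) = expectation G * expectation (\<lambda>\<omega>. exp (l * X (Suc m) \<omega>))"
    by (rule indep_prod[OF _ GF _ iG iX]) auto
  also have "\<dots> \<le> expectation G * exp (phi \<mu> l)"
  proof (rule mult_left_mono)
    show "expectation (\<lambda>\<omega>. exp (l * X (Suc m) \<omega>)) \<le> exp (phi \<mu> l)" by (rule mgf_le) simp
    show "0 \<le> expectation G"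
    proof (rule integral_nonneg_AE, rule AE_I2)
      fix \<omega> assume w: "\<omega> \<in> space M"
      have "0 \<le> W l m \<omega>" using W_pos[of l m \<omega>] by simp
      moreover have "0 \<le> e \<omega>" using eb[OF w] by auto
      ultimately show "0 \<le> G \<omega>" unfolding G_def by simp
    qed
  qed
  also have "expectation G * exp (phi \<mu> l) = expectation (\<lambda>\<omega>. W l m \<omega> * e \<omega>)"
    unfolding G_def by (simp add: exp_minus field_simps)
  also have "expectation (\<lambda>\<omega>. W l m \<omega> * (1 - e \<omega>)) + expectation (\<lambda>\<omega>. W l m \<omega> * e \<omega>)
      = expectation (\<lambda>\<omega>. W l m \<omega> * (1 - e \<omega>) + W l m \<omega> * e \<omega>)"
    by (rule Bochner_Integration.integral_add[OF i1 i2, symmetric])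
  also have "\<dots> = expectation (W l m)" by (simp add: algebra_simps)
  finally show ?case using Suc.IH by linarith
qed

lemma W_markov: "a > 0 \<Longrightarrow> prob {\<omega>\<in>space M. W l n \<omega> \<ge> a} \<le> 1 / a"
proof -
  assume a: "a > 0"
  have "prob {\<omega>\<in>space M. W l n \<omega> \<ge> a} \<le> expectation (W l n) / a"
    by (rule integral_Markov_inequality_measure[OF W_int _ _ a, of "space M"])
       (use W_pos in \<open>auto simp: less_imp_le\<close>)
  also have "\<dots> \<le> 1 / a" using W_le1 a by (simp add: divide_right_mono)
  finally show ?thesis .
qed

lemma W_eq: "W l n \<omega> = exp (l * (\<Sum>s=1..n. eps s \<omega> * X s \<omega>) - (\<Sum>s=1..n. eps s \<omega>) * phi \<mu> l)"
  unfolding W_def by (simp add: sum_distrib_left sum_distrib_right sum_subtractf algebra_simps)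

end

lemma slice:
  fixes \<delta> N :: real and n :: nat
  assumes d: "\<delta> > 1" and N: "1 \<le> N" "N \<le> real n" and n: "n \<ge> 2"
  shows "\<exists>k. 1 \<le> k \<and> k \<le> nat \<lceil>\<delta> * ln (real n)\<rceil> \<and> (\<delta>/(\<delta>-1))^(k-1) \<le> N \<and> N \<le> (\<delta>/(\<delta>-1))^k"
proof -
  define q where "q = \<delta>/(\<delta>-1)"
  have q1: "q > 1" unfolding q_def using d by simp
  have "ln (1 - 1/\<delta>) \<le> - 1/\<delta>" using ln_le_minus_one[of "1 - 1/\<delta>"] d by simp
  moreover have "ln q = - ln (1 - 1/\<delta>)"
  proof -
    have "1 - 1/\<delta> = 1 / q" unfolding q_def using d by (simp add: field_simps)
    then show ?thesis using q1 by (simp add: ln_div)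
  qed
  ultimately have lq: "ln q \<ge> 1/\<delta>" by simp
  have lqp: "ln q > 0" using q1 by simp
  define r where "r = ln N / ln q"
  have r0: "r \<ge> 0" unfolding r_def using N lqp by simp
  define k where "k = max 1 (nat \<lceil>r\<rceil>)"
  have k1: "1 \<le> k" unfolding k_def by simp
  have lnN: "ln N = r * ln q" unfolding r_def using lqp by simp
  have "real k \<ge> r" unfolding k_def by linarith
  then have "ln N \<le> ln (q^k)" unfolding lnN using lqp q1 by (simp add: ln_realpow mult_right_mono)
  then have up: "N \<le> q^k" using N q1 by simp
  have lo: "q^(k-1) \<le> N"
  proof (cases "\<lceil>r\<rceil> \<le> 1")
    case True
    then have "k = 1" unfolding k_def by linarith
    then show ?thesis using N by simp
  next
    case False
    then have "k = nat \<lceil>r\<rceil>" "k \<ge> 2" unfolding k_def by linarith+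
    then have "real (k - 1) \<le> r" by linarith
    then have "ln (q^(k-1)) \<le> ln N" unfolding lnN using lqp q1 by (simp add: ln_realpow mult_right_mono)
    then show ?thesis using N q1 by simp
  qed
  have lnn: "ln (real n) > 0" using n by simp
  have "ln N \<le> ln (real n)" using N by simp
  then have "r \<le> ln (real n) / ln q" unfolding r_def using lqp by (simp add: divide_right_mono)
  also have "\<dots> \<le> \<delta> * ln (real n)"
  proof -
    have "1 / ln q \<le> \<delta>" using lq lqp d by (simp add: field_simps)
    then have "ln (real n) * (1 / ln q) \<le> ln (real n) * \<delta>" using lnn by (intro mult_left_mono) auto
    then show ?thesis by (simp add: mult.commute)
  qed
  finally have "\<lceil>r\<rceil> \<le> \<lceil>\<delta> * ln (real n)\<rceil>" by (rule ceiling_mono)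
  moreover have "\<lceil>\<delta> * ln (real n)\<rceil> \<ge> 1" using lnn d by (simp add: zero_less_mult_iff)
  ultimately have "k \<le> nat \<lceil>\<delta> * ln (real n)\<rceil>" unfolding k_def by linarith
  then show ?thesis using k1 lo up unfolding q_def by blast
qed

context bsetting begin

lemma basic:
  assumes w: "\<omega> \<in> space M"
  shows "0 \<le> (\<Sum>s=1..n. eps s \<omega> * X s \<omega>)" "(\<Sum>s=1..n. eps s \<omega> * X s \<omega>) \<le> (\<Sum>s=1..n. eps s \<omega>)"
    "(\<Sum>s=1..n. eps s \<omega>) \<le> real n" "0 \<le> (\<Sum>s=1..n. eps s \<omega>)"
proof -
  have t: "0 \<le> eps s \<omega> * X s \<omega> \<and> eps s \<omega> * X s \<omega> \<le> eps s \<omega> \<and> eps s \<omega> \<le> 1 \<and> 0 \<le> eps s \<omega>" if "s \<in> {1..n}" for s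
  proof -
    have "eps s \<omega> \<in> {0,1}" "X s \<omega> \<in> {0..1}" using that eps_range X_range w by auto
    then show ?thesis by auto
  qed
  show "0 \<le> (\<Sum>s=1..n. eps s \<omega> * X s \<omega>)" using t by (intro sum_nonneg) auto
  show "(\<Sum>s=1..n. eps s \<omega> * X s \<omega>) \<le> (\<Sum>s=1..n. eps s \<omega>)" using t by (intro sum_mono) auto
  have "(\<Sum>s=1..n. eps s \<omega>) \<le> (\<Sum>s=1..n. 1)" using t by (intro sum_mono) auto
  then show "(\<Sum>s=1..n. eps s \<omega>) \<le> real n" by simp
  show "0 \<le> (\<Sum>s=1..n. eps s \<omega>)" using t by (intro sum_nonneg) auto
qed

lemma upper_main:
  assumes mu: "0 < \<mu>" "\<mu> < 1" and d: "\<delta> > 1" and n: "n \<ge> 2"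
  shows "\<exists>B\<in>sets M. {\<omega>\<in>space M. 1 \<le> (\<Sum>s=1..n. eps s \<omega>) \<and> \<mu> \<le> (\<Sum>s=1..n. eps s \<omega> * X s \<omega>) / (\<Sum>s=1..n. eps s \<omega>) \<and>
      ereal (\<Sum>s=1..n. eps s \<omega>) * kl_bern ((\<Sum>s=1..n. eps s \<omega> * X s \<omega>) / (\<Sum>s=1..n. eps s \<omega>)) \<mu> > ereal \<delta>} \<subseteq> B
      \<and> prob B \<le> real (nat \<lceil>\<delta> * ln (real n)\<rceil>) * exp (1 - \<delta>)"
proof -
  define q where "q = \<delta>/(\<delta>-1)"
  define K where "K = nat \<lceil>\<delta> * ln (real n)\<rceil>"
  have q1: "q > 1" unfolding q_def using d by simp
  have "\<forall>k. \<exists>l. \<forall>x\<in>{\<mu>..1}. kl_bern x \<mu> > ereal (\<delta>/q^k) \<longrightarrow> l * x - phi \<mu> l \<ge> \<delta>/q^k"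
    using core[OF mu] d q1 by simp
  then obtain lam where lam0: "\<forall>k. \<forall>x\<in>{\<mu>..1}. kl_bern x \<mu> > ereal (\<delta>/q^k) \<longrightarrow> lam k * x - phi \<mu> (lam k) \<ge> \<delta>/q^k"
    by (rule choice[THEN exE])
  have lam: "\<And>k x. x \<in> {\<mu>..1} \<Longrightarrow> kl_bern x \<mu> > ereal (\<delta>/q^k) \<Longrightarrow> lam k * x - phi \<mu> (lam k) \<ge> \<delta>/q^k"
    using lam0 by blast
  define A where "A k = {\<omega>\<in>space M. W (lam k) n \<omega> \<ge> exp (\<delta> - 1)}" for k
  have Asets: "A k \<in> sets M" for k
  proof -
    have [measurable]: "W (lam k) n \<in> borel_measurable M" by (rule meas_M[OF W_measF])
    show ?thesis unfolding A_def by measurable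
  qed
  have PA: "prob (A k) \<le> exp (1 - \<delta>)" for k
    using W_markov[of "exp (\<delta> - 1)" "lam k"] unfolding A_def by (simp add: exp_diff)
  define B where "B = (\<Union>k\<in>{1..K}. A k)"
  have Bsets: "B \<in> sets M" unfolding B_def using Asets by auto
  have "prob B \<le> (\<Sum>k\<in>{1..K}. prob (A k))" unfolding B_def
    by (rule finite_measure_subadditive_finite) (use Asets in auto)
  also have "\<dots> \<le> (\<Sum>k\<in>{1..K}. exp (1 - \<delta>))" by (rule sum_mono) (rule PA)
  also have "\<dots> = real K * exp (1 - \<delta>)" by simp
  finally have PB: "prob B \<le> real K * exp (1 - \<delta>)" .
  have incl: "\<omega> \<in> B" if w: "\<omega> \<in> space M" and N1: "1 \<le> (\<Sum>s=1..n. eps s \<omega>)"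
    and xm: "\<mu> \<le> (\<Sum>s=1..n. eps s \<omega> * X s \<omega>) / (\<Sum>s=1..n. eps s \<omega>)"
    and big: "ereal (\<Sum>s=1..n. eps s \<omega>) * kl_bern ((\<Sum>s=1..n. eps s \<omega> * X s \<omega>) / (\<Sum>s=1..n. eps s \<omega>)) \<mu> > ereal \<delta>"
    for \<omega>
  proof -
    define N where "N = (\<Sum>s=1..n. eps s \<omega>)"
    define S where "S = (\<Sum>s=1..n. eps s \<omega> * X s \<omega>)"
    define x where "x = S / N"
    have N0: "N > 0" and N1': "1 \<le> N" using N1 unfolding N_def by auto
    have SN: "S \<le> N" "N \<le> real n" using basic[OF w] unfolding S_def N_def by auto
    have x1: "x \<in> {\<mu>..1}" using xm SN N0 unfolding x_def S_def N_def by auto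
    have Sx: "S = N * x" unfolding x_def using N0 by simp
    obtain k where k: "1 \<le> k" "k \<le> K" "q^(k-1) \<le> N" "N \<le> q^k"
      using slice[OF d N1' SN(2) n] unfolding q_def K_def by blast
    have qk: "q^k > 0" using q1 by simp
    have kl: "kl_bern x \<mu> > ereal (\<delta> / q^k)"
    proof (cases "kl_bern x \<mu>")
      case (real v)
      have "N * v > \<delta>" using big real unfolding x_def S_def N_def by simp
      then have "v > \<delta> / N" using N0 by (simp add: field_simps)
      moreover have "\<delta> / q^k \<le> \<delta> / N" using d N0 k(4) by (intro divide_left_mono) auto
      ultimately show ?thesis using real by simp
    next
      case PInf then show ?thesis by simp
    next
      case MInf
      then show ?thesis using big N0 unfolding x_def S_def N_def by simp
    qed
    have lx: "lam k * x - phi \<mu> (lam k) \<ge> \<delta> / q^k" by (rule lam[OF x1 kl])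
    have "q^(k-1) * (\<delta> / q^k) = \<delta> / q"
    proof -
      have "q^k = q^(Suc (k-1))" using k(1) by simp
      then have "q^k = q^(k-1) * q" by (simp only: power_Suc2)
      then show ?thesis using q1 by (simp add: field_simps)
    qed
    also have "\<delta> / q = \<delta> - 1" unfolding q_def using d by (simp add: field_simps)
    finally have e1: "q^(k-1) * (\<delta> / q^k) = \<delta> - 1" .
    have "\<delta> - 1 \<le> N * (\<delta> / q^k)" unfolding e1[symmetric]
      by (rule mult_right_mono[OF k(3)]) (use d qk in simp)
    also have "\<dots> \<le> N * (lam k * x - phi \<mu> (lam k))" by (rule mult_left_mono[OF lx]) (use N0 in simp)
    also have "\<dots> = lam k * S - N * phi \<mu> (lam k)" unfolding Sx by (simp add: algebra_simps)
    finally have "exp (\<delta> - 1) \<le> W (lam k) n \<omega>" unfolding W_eq S_def N_def by simp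
    then have "\<omega> \<in> A k" unfolding A_def using w by simp
    then show ?thesis unfolding B_def using k by auto
  qed
  show ?thesis using Bsets PB incl unfolding K_def by blast
qed

end

context bsetting begin

lemma upper_all:
  assumes d: "\<delta> > 1" and n: "n \<ge> 2"
  shows "\<exists>B\<in>sets M. {\<omega>\<in>space M. 1 \<le> (\<Sum>s=1..n. eps s \<omega>) \<and> \<mu> \<le> (\<Sum>s=1..n. eps s \<omega> * X s \<omega>) / (\<Sum>s=1..n. eps s \<omega>) \<and>
      ereal (\<Sum>s=1..n. eps s \<omega>) * kl_bern ((\<Sum>s=1..n. eps s \<omega> * X s \<omega>) / (\<Sum>s=1..n. eps s \<omega>)) \<mu> > ereal \<delta>} \<subseteq> B
      \<and> prob B \<le> real (nat \<lceil>\<delta> * ln (real n)\<rceil>) * exp (1 - \<delta>)"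
proof -
  have rhs0: "0 \<le> real (nat \<lceil>\<delta> * ln (real n)\<rceil>) * exp (1 - \<delta>)" by simp
  consider "\<mu> = 0" | "\<mu> = 1" | "0 < \<mu> \<and> \<mu> < 1" using mu01 by linarith
  then show ?thesis
  proof cases
    case 3 then show ?thesis using upper_main[OF _ _ d n] by blast
  next
    case 2
    have key: "False" if w: "\<omega> \<in> space M" and N1: "1 \<le> (\<Sum>s=1..n. eps s \<omega>)"
        and xm: "\<mu> \<le> (\<Sum>s=1..n. eps s \<omega> * X s \<omega>) / (\<Sum>s=1..n. eps s \<omega>)"
        and big: "ereal (\<Sum>s=1..n. eps s \<omega>) * kl_bern ((\<Sum>s=1..n. eps s \<omega> * X s \<omega>) / (\<Sum>s=1..n. eps s \<omega>)) \<mu> > ereal \<delta>"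
      for \<omega>
    proof -
      have "(\<Sum>s=1..n. eps s \<omega> * X s \<omega>) / (\<Sum>s=1..n. eps s \<omega>) \<le> 1"
        using basic[OF w, of n] N1 by simp
      then have "(\<Sum>s=1..n. eps s \<omega> * X s \<omega>) / (\<Sum>s=1..n. eps s \<omega>) = 1" using xm 2 by simp
      moreover have "kl_bern 1 1 = 0" by (simp add: kl_bern_def xlogxy_def)
      ultimately show False using big 2 d by simp
    qed
    have "{\<omega>\<in>space M. 1 \<le> (\<Sum>s=1..n. eps s \<omega>) \<and> \<mu> \<le> (\<Sum>s=1..n. eps s \<omega> * X s \<omega>) / (\<Sum>s=1..n. eps s \<omega>) \<and>
      ereal (\<Sum>s=1..n. eps s \<omega>) * kl_bern ((\<Sum>s=1..n. eps s \<omega> * X s \<omega>) / (\<Sum>s=1..n. eps s \<omega>)) \<mu> > ereal \<delta>} \<subseteq> {}"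
      using key by blast
    then show ?thesis using rhs0 by (intro bexI[of _ "{}"]) auto
  next
    case 1
    define B where "B = (\<Union>s\<in>{1..n}. {\<omega>\<in>space M. X s \<omega> \<noteq> 0})"
    have Bs: "{\<omega>\<in>space M. X s \<omega> \<noteq> 0} \<in> sets M" if "s \<in> {1..n}" for s
    proof -
      have [measurable]: "X s \<in> borel_measurable M" using XM that by simp
      show ?thesis by measurable
    qed
    have B0: "prob {\<omega>\<in>space M. X s \<omega> \<noteq> 0} = 0" if "s \<in> {1..n}" for s
    proof -
      have s: "1 \<le> s" using that by simp
      have iX: "integrable M (X s)"
        by (rule bounded_int[where B=1, OF XM[OF s]]) (use X_range s in auto)
      have "AE \<omega> in M. X s \<omega> = 0"
        using integral_nonneg_eq_0_iff_AE[OF iX] X_mean[OF s] 1 X_range[OF s] by auto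
      then have "emeasure M {\<omega>\<in>space M. X s \<omega> \<noteq> 0} = 0"
        using AE_iff_measurable[OF Bs[OF that] refl] by simp
      then show ?thesis by (simp add: measure_def)
    qed
    have "prob B \<le> (\<Sum>s\<in>{1..n}. prob {\<omega>\<in>space M. X s \<omega> \<noteq> 0})" unfolding B_def
      by (rule finite_measure_subadditive_finite) (use Bs in auto)
    also have "\<dots> = 0" using B0 by simp
    finally have PB: "prob B \<le> real (nat \<lceil>\<delta> * ln (real n)\<rceil>) * exp (1 - \<delta>)" using rhs0 by linarith
    have "{\<omega>\<in>space M. 1 \<le> (\<Sum>s=1..n. eps s \<omega>) \<and> \<mu> \<le> (\<Sum>s=1..n. eps s \<omega> * X s \<omega>) / (\<Sum>s=1..n. eps s \<omega>) \<and>
      ereal (\<Sum>s=1..n. eps s \<omega>) * kl_bern ((\<Sum>s=1..n. eps s \<omega> * X s \<omega>) / (\<Sum>s=1..n. eps s \<omega>)) \<mu> > ereal \<delta>} \<subseteq> B"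
    proof safe
      fix \<omega> assume w: "\<omega> \<in> space M"
        and big: "ereal (\<Sum>s=1..n. eps s \<omega>) * kl_bern ((\<Sum>s=1..n. eps s \<omega> * X s \<omega>) / (\<Sum>s=1..n. eps s \<omega>)) \<mu> > ereal \<delta>"
      show "\<omega> \<in> B"
      proof (rule ccontr)
        assume "\<omega> \<notin> B"
        then have "\<forall>s\<in>{1..n}. X s \<omega> = 0" unfolding B_def using w by auto
        then have "(\<Sum>s=1..n. eps s \<omega> * X s \<omega>) = 0" by simp
        moreover have "kl_bern 0 0 = 0" by (simp add: kl_bern_def xlogxy_def)
        ultimately show False using big 1 d by simp
      qed
    qed
    then show ?thesis using PB B_def Bs by blast
  qed
qed

end

lemma meas_sub: "A \<subseteq> B \<Longrightarrow> B \<in> sets M \<Longrightarrow> finite_measure M \<Longrightarrow> measure M A \<le> measure M B"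
  by (cases "A \<in> sets M") (auto simp: measure_notin_sets intro: finite_measure.finite_measure_mono)

lemma indep_set_mono2: "prob_space M \<Longrightarrow> prob_space.indep_set M A B \<Longrightarrow> C \<subseteq> B \<Longrightarrow> prob_space.indep_set M A C"
  unfolding prob_space.indep_set_def
  by (rule prob_space.indep_sets_mono_sets) (auto split: bool.split)

theorem mainTheorem9:
  fixes M :: "'a measure" and F :: "nat \<Rightarrow> 'a measure"
    and X :: "nat \<Rightarrow> 'a \<Rightarrow> real" and eps :: "nat \<Rightarrow> 'a \<Rightarrow> real"
    and \<mu> \<delta> :: real and n :: nat
  assumes "prob_space M"
    and X_indep: "prob_space.indep_vars M (\<lambda>_. borel) X {1..}"
    and X_range: "\<And>t \<omega>. t \<ge> 1 \<Longrightarrow> \<omega> \<in> space M \<Longrightarrow> X t \<omega> \<in> {0..1}"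
    and X_mean: "\<And>t. t \<ge> 1 \<Longrightarrow> prob_space.expectation M (X t) = \<mu>"
    and F_sub: "\<And>t. subalgebra M (F t)"
    and F_mono: "\<And>s t. s \<le> t \<Longrightarrow> sets (F s) \<subseteq> sets (F t)"
    and X_adapted: "\<And>s t. 1 \<le> s \<Longrightarrow> s \<le> t \<Longrightarrow> X s \<in> borel_measurable (F t)"
    and X_future_indep: "\<And>s t. t < s \<Longrightarrow>
          prob_space.indep_set M (sets (F t)) {X s -` A \<inter> space M | A. A \<in> sets borel}"
    and eps_range: "\<And>t \<omega>. t \<ge> 1 \<Longrightarrow> \<omega> \<in> space M \<Longrightarrow> eps t \<omega> \<in> {0, 1}"
    and eps_pred: "\<And>t. t \<ge> 1 \<Longrightarrow> eps t \<in> borel_measurable (F (t - 1))"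
    and "\<delta> > 0" and "n \<ge> 2"
  shows "measure M {\<omega> \<in> space M.
            (\<Sum>s=1..n. eps s \<omega>) \<ge> 1 \<and>
            ereal (\<Sum>s=1..n. eps s \<omega>) *
              kl_bern ((\<Sum>s=1..n. eps s \<omega> * X s \<omega>) / (\<Sum>s=1..n. eps s \<omega>)) \<mu>
            > ereal \<delta>}
         \<le> 2 * exp 1 * real_of_int \<lceil>\<delta> * ln (real n)\<rceil> * exp (- \<delta>)"
proof -
  interpret P: prob_space M by fact
  interpret S1: bsetting M F X eps \<mu>
    by (intro bsetting.intro bsetting_axioms.intro) (fact assms)+
  have Xb: "(\<lambda>\<omega>. 1 - X s \<omega>) \<in> borel_measurable (F t)" if "1 \<le> s" "s \<le> t" for s t
  proof -
    have [measurable]: "X s \<in> borel_measurable (F t)" using X_adapted that by simp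
    show ?thesis by measurable
  qed
  have Xi: "prob_space.indep_set M (sets (F t)) {(\<lambda>\<omega>. 1 - X s \<omega>) -` A \<inter> space M | A. A \<in> sets borel}"
    if "t < s" for s t
  proof (rule indep_set_mono2[OF assms(1) X_future_indep[OF that]], safe)
    fix A :: "real set" assume A: "A \<in> sets borel"
    have "(\<lambda>y::real. 1 - y) -` A \<in> sets borel"
      using measurable_sets[of "\<lambda>y::real. 1 - y" borel borel A] A by simp
    moreover have "(\<lambda>\<omega>. 1 - X s \<omega>) -` A \<inter> space M = X s -` ((\<lambda>y::real. 1 - y) -` A) \<inter> space M" by auto
    ultimately show "\<exists>B. (\<lambda>\<omega>. 1 - X s \<omega>) -` A \<inter> space M = X s -` B \<inter> space M \<and> B \<in> sets borel" by blast
  qed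
  have Xm2: "P.expectation (\<lambda>\<omega>. 1 - X t \<omega>) = 1 - \<mu>" if "t \<ge> 1" for t
  proof -
    have iX: "integrable M (X t)"
      by (rule S1.bounded_int[where B=1, OF S1.XM[OF that]]) (use X_range that in auto)
    have "P.expectation (\<lambda>\<omega>. 1 - X t \<omega>) = P.expectation (\<lambda>\<omega>. 1) - P.expectation (X t)"
      using iX by (intro Bochner_Integration.integral_diff) auto
    then show ?thesis using X_mean[OF that] P.prob_space by simp
  qed
  interpret S2: bsetting M F "\<lambda>t \<omega>. 1 - X t \<omega>" eps "1 - \<mu>"
  proof (intro bsetting.intro bsetting_axioms.intro)
    show "prob_space M" by fact
    show "\<And>t \<omega>. 1 \<le> t \<Longrightarrow> \<omega> \<in> space M \<Longrightarrow> 1 - X t \<omega> \<in> {0..1}" using X_range by auto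
  qed (use Xm2 F_sub F_mono Xb Xi eps_range eps_pred in auto)
  show ?thesis
  proof (cases "\<delta> \<le> 1")
    case True
    have lnn: "ln (real n) > 0" using assms by simp
    have c1: "real_of_int \<lceil>\<delta> * ln (real n)\<rceil> \<ge> 1" using lnn assms by (simp add: zero_less_mult_iff)
    have e: "exp 1 * exp (- \<delta>) = exp (1 - \<delta>)" using exp_add[of 1 "- \<delta>"] by simp
    have e1: "exp (1 - \<delta>) \<ge> 1" using True by simp
    have "real_of_int \<lceil>\<delta> * ln (real n)\<rceil> * exp (1 - \<delta>) \<ge> 1 * 1"
      by (rule mult_mono[OF c1 e1]) (use c1 in auto)
    moreover have "2 * exp 1 * real_of_int \<lceil>\<delta> * ln (real n)\<rceil> * exp (- \<delta>)
        = 2 * (real_of_int \<lceil>\<delta> * ln (real n)\<rceil> * (exp 1 * exp (- \<delta>)))" by (simp only: mult_ac)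
    ultimately have "2 * exp 1 * real_of_int \<lceil>\<delta> * ln (real n)\<rceil> * exp (- \<delta>) \<ge> 2" unfolding e by linarith
    moreover have "measure M {\<omega> \<in> space M.
            (\<Sum>s=1..n. eps s \<omega>) \<ge> 1 \<and>
            ereal (\<Sum>s=1..n. eps s \<omega>) *
              kl_bern ((\<Sum>s=1..n. eps s \<omega> * X s \<omega>) / (\<Sum>s=1..n. eps s \<omega>)) \<mu>
            > ereal \<delta>} \<le> 1" by (rule P.prob_le_1)
    ultimately show ?thesis by linarith
  next
    case False
    then have d: "\<delta> > 1" by simp
    obtain B1 where B1: "B1 \<in> sets M" "{\<omega>\<in>space M. 1 \<le> (\<Sum>s=1..n. eps s \<omega>) \<and> \<mu> \<le> (\<Sum>s=1..n. eps s \<omega> * X s \<omega>) / (\<Sum>s=1..n. eps s \<omega>) \<and>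
      ereal (\<Sum>s=1..n. eps s \<omega>) * kl_bern ((\<Sum>s=1..n. eps s \<omega> * X s \<omega>) / (\<Sum>s=1..n. eps s \<omega>)) \<mu> > ereal \<delta>} \<subseteq> B1"
      "P.prob B1 \<le> real (nat \<lceil>\<delta> * ln (real n)\<rceil>) * exp (1 - \<delta>)"
      using S1.upper_all[OF d assms(12)] by blast
    obtain B2 where B2: "B2 \<in> sets M" "{\<omega>\<in>space M. 1 \<le> (\<Sum>s=1..n. eps s \<omega>) \<and> 1 - \<mu> \<le> (\<Sum>s=1..n. eps s \<omega> * (1 - X s \<omega>)) / (\<Sum>s=1..n. eps s \<omega>) \<and>
      ereal (\<Sum>s=1..n. eps s \<omega>) * kl_bern ((\<Sum>s=1..n. eps s \<omega> * (1 - X s \<omega>)) / (\<Sum>s=1..n. eps s \<omega>)) (1 - \<mu>) > ereal \<delta>} \<subseteq> B2"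
      "P.prob B2 \<le> real (nat \<lceil>\<delta> * ln (real n)\<rceil>) * exp (1 - \<delta>)"
      using S2.upper_all[OF d assms(12)] by blast
    have incl: "\<omega> \<in> B1 \<union> B2" if w: "\<omega> \<in> space M" and N1: "1 \<le> (\<Sum>s=1..n. eps s \<omega>)"
      and big: "ereal (\<Sum>s=1..n. eps s \<omega>) * kl_bern ((\<Sum>s=1..n. eps s \<omega> * X s \<omega>) / (\<Sum>s=1..n. eps s \<omega>)) \<mu> > ereal \<delta>"
      for \<omega>
    proof (cases "\<mu> \<le> (\<Sum>s=1..n. eps s \<omega> * X s \<omega>) / (\<Sum>s=1..n. eps s \<omega>)")
      case True
      then show ?thesis using B1(2) w N1 big by blast
    next
      case False
      define N where "N = (\<Sum>s=1..n. eps s \<omega>)"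
      define S where "S = (\<Sum>s=1..n. eps s \<omega> * X s \<omega>)"
      have S': "(\<Sum>s=1..n. eps s \<omega> * (1 - X s \<omega>)) = N - S"
        unfolding N_def S_def by (simp add: algebra_simps sum_subtractf)
      have N0: "N > 0" using N1 unfolding N_def by simp
      have x': "(N - S) / N = 1 - S / N" using N0 by (simp add: field_simps)
      have kl: "kl_bern (1 - S / N) (1 - \<mu>) = kl_bern (S / N) \<mu>"
        unfolding kl_bern_def by (simp add: add.commute)
      have "1 - \<mu> \<le> (\<Sum>s=1..n. eps s \<omega> * (1 - X s \<omega>)) / (\<Sum>s=1..n. eps s \<omega>)"
        unfolding S' N_def[symmetric] x' using False unfolding N_def[symmetric] S_def[symmetric] by simp
      moreover have "ereal (\<Sum>s=1..n. eps s \<omega>) * kl_bern ((\<Sum>s=1..n. eps s \<omega> * (1 - X s \<omega>)) / (\<Sum>s=1..n. eps s \<omega>)) (1 - \<mu>) > ereal \<delta>"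
        unfolding S' N_def[symmetric] x' kl using big unfolding N_def[symmetric] S_def[symmetric] by simp
      ultimately show ?thesis using B2(2) w N1 by blast
    qed
    have "measure M {\<omega> \<in> space M.
            (\<Sum>s=1..n. eps s \<omega>) \<ge> 1 \<and>
            ereal (\<Sum>s=1..n. eps s \<omega>) *
              kl_bern ((\<Sum>s=1..n. eps s \<omega> * X s \<omega>) / (\<Sum>s=1..n. eps s \<omega>)) \<mu>
            > ereal \<delta>} \<le> measure M (B1 \<union> B2)"
      by (rule meas_sub) (use incl B1(1) B2(1) P.finite_measure_axioms in auto)
    also have "\<dots> \<le> P.prob B1 + P.prob B2" by (rule measure_Un_le) (use B1 B2 in auto)
    also have "\<dots> \<le> 2 * (real (nat \<lceil>\<delta> * ln (real n)\<rceil>) * exp (1 - \<delta>))" using B1(3) B2(3) by simp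
    also have "\<dots> = 2 * exp 1 * real_of_int \<lceil>\<delta> * ln (real n)\<rceil> * exp (- \<delta>)"
    proof -
      have "0 < \<delta> * ln (real n)" using d assms(12) by (intro mult_pos_pos) auto
      then have "\<lceil>\<delta> * ln (real n)\<rceil> \<ge> 0" by linarith
      then show ?thesis by (simp add: exp_diff exp_minus field_simps)
    qed
    finally show ?thesis .
  qed
qed

end
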